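(* Let $\mathfrak{n}$ be a complex $4$-dimensional nilpotent algebra of nil-index $3$. Then $\mathfrak{n}$ is a $2$-step nilpotent algebra, or $\mathfrak{n}$ is isomorphic to one of the following algebras, each given on a basis $e_1,\dots,e_4$ (all products of basis elements not listed are zero; $\alpha\in\mathbb{C}$): \begin{itemize} \item $\mathfrak{L}_{01}$: $e_1e_2=e_3,\ e_1e_3=e_4,\ e_2e_1=-e_3,\ e_3e_1=-e_4$; \item $\mathfrak{L}_{09}$: $e_1e_2=-e_3+e_4,\ e_1e_3=-e_4,\ e_2e_1=e_3,\ e_3e_1=e_4$; \item $\mathfrak{L}_{10}$: $e_1e_2=-e_3,\ e_1e_3=-e_4,\ e_2e_1=e_3,\ e_2e_2=e_4,\ e_3e_1=e_4$; \item $\mathfrak{L}_{11}$: $e_1e_1=e_4,\ e_1e_2=-e_3,\ e_1e_3=-e_4,\ e_2e_1=e_3,\ e_2e_2=e_4,\ e_3e_1=e_4$; \item $\mathfrak{L}_{12}$: $e_1e_1=e_4,\ e_1e_2=-e_3,\ e_1e_3=-e_4,\ e_2e_1=e_3,\ e_3e_1=e_4$; \item $\mathbb{M}_{03}^{\alpha}$: $e_1e_2=e_3,\ e_1e_3=\alpha e_4,\ e_2e_1=-e_3,\ e_3e_1=(1-\alpha)e_4$; \item $\mathbb{M}_{04}^{\alpha}$: $e_1e_2=e_3,\ e_1e_3=\alpha e_4,\ e_2e_1=-e_3,\ e_2e_2=e_4,\ e_3e_1=(1-\alpha)e_4$; \item $\mathbb{M}_{05}$: $e_1e_2=e_3,\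 e_2e_1=-e_3,\ e_2e_3=e_4,\ e_3e_1=e_4,\ e_3e_2=-e_4$; \item $\mathbb{M}_{06}$: $e_1e_2=e_3,\ e_2e_1=-e_3,\ e_2e_2=e_4,\ e_2e_3=e_4,\ e_3e_1=e_4,\ e_3e_2=-e_4$; \item $\mathbb{M}_{07}$: $e_1e_2=e_3,\ e_2e_1=-e_3,\ e_3e_3=e_4$; \item $\mathbb{M}_{08}$: $e_1e_2=e_3+e_4,\ e_2e_1=-e_3,\ e_3e_3=e_4$; \item $\mathbb{M}_{09}$: $e_1e_1=e_4,\ e_1e_2=e_3,\ e_2e_1=-e_3,\ e_3e_3=e_4$; \item $\mathbb{M}_{10}^{\alpha}$: $e_1e_1=\alpha e_4,\ e_1e_2=e_3,\ e_1e_3=e_4,\ e_2e_1=-e_3,\ e_3e_1=-e_4,\ e_3e_3=e_4$; \item $\mathbb{M}_{11}$: $e_1e_2=e_3+e_4,\ e_1e_3=e_4,\ e_2e_1=-e_3,\ e_3e_1=-e_4,\ e_3e_3=e_4$; \item $\mathbb{M}_{12}^{\alpha}$: $e_1e_1=\alpha e_4,\ e_1e_2=e_3,\ e_1e_3=e_4,\ e_2e_1=-e_3,\ e_2e_2=e_4,\ e_3e_1=-e_4,\ e_3e_3=e_4$. \end{itemize}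
   Context: All algebras are over $\mathbb{C}$ and not necessarily associative. An algebra is of nil-index $3$ (a nil-algebra of nil-index $3$) if it satisfies $(xx)x=0$ and $x(xx)=0$ for all $x$. An algebra $A$ is nilpotent if there is $n$ such that every product of $n$ elements of $A$, with any arrangement of brackets, is zero; it is $2$-step nilpotent if $(AA)A=A(AA)=0$. *)

theory Defs
  imports "HOL-Analysis.Analysis"
begin

text \<open>A complex 4-dimensional algebra is modelled (after choosing a basis) as a
  complex-bilinear multiplication on the coordinate space complex^4.\<close>

type_synonym V4 = "complex ^ 4"

definition cbilinear :: "(V4 \<Rightarrow> V4 \<Rightarrow> V4) \<Rightarrow> bool" where
  "cbilinear m \<longleftrightarrow>
     (\<forall>a x y z. m (a *s x + y) z = a *s m x z + m y z \<and>
                m z (a *s x + y) = a *s m z x + m z y)"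

inductive prods :: "(V4 \<Rightarrow> V4 \<Rightarrow> V4) \<Rightarrow> nat \<Rightarrow> V4 \<Rightarrow> bool" for m where
  single: "prods m 1 x"
| mult: "prods m a x \<Longrightarrow> prods m b y \<Longrightarrow> prods m (a + b) (m x y)"

definition nilpotent_alg :: "(V4 \<Rightarrow> V4 \<Rightarrow> V4) \<Rightarrow> bool" where
  "nilpotent_alg m \<longleftrightarrow> (\<exists>n\<ge>1. \<forall>v. prods m n v \<longrightarrow> v = 0)"

definition nil_index3 :: "(V4 \<Rightarrow> V4 \<Rightarrow> V4) \<Rightarrow> bool" where
  "nil_index3 m \<longleftrightarrow> (\<forall>x. m (m x x) x = 0 \<and> m x (m x x) = 0)"

definition two_step_nilpotent :: "(V4 \<Rightarrow> V4 \<Rightarrow> V4) \<Rightarrow> bool" where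
  "two_step_nilpotent m \<longleftrightarrow> (\<forall>x y z. m (m x y) z = 0 \<and> m x (m y z) = 0)"

definition alg_iso :: "(V4 \<Rightarrow> V4 \<Rightarrow> V4) \<Rightarrow> (V4 \<Rightarrow> V4 \<Rightarrow> V4) \<Rightarrow> bool" where
  "alg_iso m m' \<longleftrightarrow>
     (\<exists>f. bij f \<and> (\<forall>a x y. f (a *s x + y) = a *s f x + f y) \<and>
          (\<forall>x y. f (m x y) = m' (f x) (f y)))"

definition e :: "4 \<Rightarrow> V4" where "e k = axis k 1"

text \<open>Multiplication table given as a list of entries (i, j, e_i e_j); unlisted
  products of basis vectors are zero.\<close>
definition tbl :: "(4 \<times> 4 \<times> V4) list \<Rightarrow> 4 \<Rightarrow> 4 \<Rightarrow> V4" where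
  "tbl L i j = sum_list [v. (a, b, v) \<leftarrow> L, a = i \<and> b = j]"

definition tbl_mult :: "(4 \<Rightarrow> 4 \<Rightarrow> V4) \<Rightarrow> V4 \<Rightarrow> V4 \<Rightarrow> V4" where
  "tbl_mult T x y = (\<Sum>i\<in>UNIV. \<Sum>j\<in>UNIV. (x $ i * y $ j) *s T i j)"

definition L01 where "L01 = tbl_mult (tbl [(1,2,e 3), (1,3,e 4), (2,1,-e 3), (3,1,-e 4)])"
definition L09 where "L09 = tbl_mult (tbl [(1,2,-e 3 + e 4), (1,3,-e 4), (2,1,e 3), (3,1,e 4)])"
definition L10 where "L10 = tbl_mult (tbl [(1,2,-e 3), (1,3,-e 4), (2,1,e 3), (2,2,e 4), (3,1,e 4)])"
definition L11 where "L11 = tbl_mult (tbl [(1,1,e 4), (1,2,-e 3), (1,3,-e 4), (2,1,e 3), (2,2,e 4), (3,1,e 4)])"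
definition L12 where "L12 = tbl_mult (tbl [(1,1,e 4), (1,2,-e 3), (1,3,-e 4), (2,1,e 3), (3,1,e 4)])"
definition M03 where "M03 \<alpha> = tbl_mult (tbl [(1,2,e 3), (1,3,\<alpha> *s e 4), (2,1,-e 3), (3,1,(1-\<alpha>) *s e 4)])"
definition M04 where "M04 \<alpha> = tbl_mult (tbl [(1,2,e 3), (1,3,\<alpha> *s e 4), (2,1,-e 3), (2,2,e 4), (3,1,(1-\<alpha>) *s e 4)])"
definition M05 where "M05 = tbl_mult (tbl [(1,2,e 3), (2,1,-e 3), (2,3,e 4), (3,1,e 4), (3,2,-e 4)])"
definition M06 where "M06 = tbl_mult (tbl [(1,2,e 3), (2,1,-e 3), (2,2,e 4), (2,3,e 4), (3,1,e 4), (3,2,-e 4)])"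
definition M07 where "M07 = tbl_mult (tbl [(1,2,e 3), (2,1,-e 3), (3,3,e 4)])"
definition M08 where "M08 = tbl_mult (tbl [(1,2,e 3 + e 4), (2,1,-e 3), (3,3,e 4)])"
definition M09 where "M09 = tbl_mult (tbl [(1,1,e 4), (1,2,e 3), (2,1,-e 3), (3,3,e 4)])"
definition M10 where "M10 \<alpha> = tbl_mult (tbl [(1,1,\<alpha> *s e 4), (1,2,e 3), (1,3,e 4), (2,1,-e 3), (3,1,-e 4), (3,3,e 4)])"
definition M11 where "M11 = tbl_mult (tbl [(1,2,e 3 + e 4), (1,3,e 4), (2,1,-e 3), (3,1,-e 4), (3,3,e 4)])"
definition M12 where "M12 \<alpha> = tbl_mult (tbl [(1,1,\<alpha> *s e 4), (1,2,e 3), (1,3,e 4), (2,1,-e 3), (2,2,e 4), (3,1,-e 4), (3,3,e 4)])"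

end

theory Submission
  imports Defs
begin

definition gen :: "complex \<Rightarrow> complex \<Rightarrow> complex \<Rightarrow> complex \<Rightarrow> complex \<Rightarrow> complex \<Rightarrow> complex \<Rightarrow> complex \<Rightarrow> complex \<Rightarrow> complex \<Rightarrow> V4 \<Rightarrow> V4 \<Rightarrow> V4" where
"gen w b11 b12 b21 b22 c1 c2 d1 d2 g x y = (\<chi> k. if k = 3 then w * (x$1 * y$2 - x$2 * y$1)
   else if k = 4 then b11*x$1*y$1 + b12*x$1*y$2 + b21*x$2*y$1 + b22*x$2*y$2 + c1*x$1*y$3 + c2*x$2*y$3 + d1*x$3*y$1 + d2*x$3*y$2 + g*x$3*y$3 else 0)"

lemma iso_phi:
  assumes i1: "\<And>y. \<psi> (\<phi> y) = y" and i2: "\<And>y. \<phi> (\<psi> y) = y"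
    and lin: "\<And>a x y. \<phi> (a *s x + y) = a *s \<phi> x + \<phi> y"
    and hom: "\<And>x y. m (\<phi> x) (\<phi> y) = \<phi> (m' x y)"
  shows "alg_iso m m'"
  unfolding alg_iso_def
proof (intro exI[of _ \<psi>] conjI allI)
  show "bij \<psi>" unfolding bij_def inj_def surj_def using i1 i2 by metis
  fix a x y
  have "\<psi> (a *s x + y) = \<psi> (a *s \<phi> (\<psi> x) + \<phi> (\<psi> y))" by (simp only: i2)
  also have "\<dots> = a *s \<psi> x + \<psi> y" by (simp only: lin[symmetric] i1)
  finally show "\<psi> (a *s x + y) = a *s \<psi> x + \<psi> y" .
next
  fix x y
  have "\<psi> (m x y) = \<psi> (m (\<phi> (\<psi> x)) (\<phi> (\<psi> y)))" by (simp only: i2)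
  also have "\<dots> = m' (\<psi> x) (\<psi> y)" by (simp only: hom i1)
  finally show "\<psi> (m x y) = m' (\<psi> x) (\<psi> y)" .
qed

lemma alg_iso_trans: "alg_iso m1 m2 \<Longrightarrow> alg_iso m2 m3 \<Longrightarrow> alg_iso m1 m3"
  unfolding alg_iso_def
proof (elim exE conjE)
  fix f g assume f: "bij f" "\<forall>a x y. f (a *s x + y) = a *s f x + f y" "\<forall>x y. f (m1 x y) = m2 (f x) (f y)"
    and g: "bij g" "\<forall>a x y. g (a *s x + y) = a *s g x + g y" "\<forall>x y. g (m2 x y) = m3 (g x) (g y)"
  show "\<exists>h. bij h \<and> (\<forall>a x y. h (a *s x + y) = a *s h x + h y) \<and> (\<forall>x y. h (m1 x y) = m3 (h x) (h y))"
    by (rule exI[of _ "g \<circ> f"]) (simp add: f g bij_comp)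
qed


definition phiGL :: "complex \<Rightarrow> complex \<Rightarrow> complex \<Rightarrow> complex \<Rightarrow> complex \<Rightarrow> complex \<Rightarrow> V4 \<Rightarrow> V4" where
 "phiGL p q r t \<sigma> \<mu> y = (\<chi> k::4. if k = 1 then p*y$1 + r*y$2 else if k = 2 then q*y$1 + t*y$2 else if k = 3 then \<sigma>*y$3 else \<mu>*y$4)"
definition psiGL :: "complex \<Rightarrow> complex \<Rightarrow> complex \<Rightarrow> complex \<Rightarrow> complex \<Rightarrow> complex \<Rightarrow> V4 \<Rightarrow> V4" where
 "psiGL p q r t \<sigma> \<mu> y = (\<chi> k::4. if k = 1 then (t*y$1 - r*y$2)/(p*t-q*r) else if k = 2 then (p*y$2 - q*y$1)/(p*t-q*r) else if k = 3 then y$3/\<sigma> else y$4/\<mu>)"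

lemma inv2a: fixes d::complex assumes "d \<noteq> 0" "d = p*t - q*r"
  shows "p*((t*a - r*b)/d) + r*((p*b - q*a)/d) = a"
proof -
  have "p*((t*a - r*b)/d) + r*((p*b - q*a)/d) = (p*(t*a - r*b) + r*(p*b - q*a))/d"
    by (simp add: add_divide_distrib)
  also have "p*(t*a - r*b) + r*(p*b - q*a) = d*a" unfolding assms(2) by (simp add: algebra_simps)
  finally show ?thesis using assms(1) by simp
qed
lemma inv2b: fixes d::complex assumes "d \<noteq> 0" "d = p*t - q*r"
  shows "q*((t*a - r*b)/d) + t*((p*b - q*a)/d) = b"
proof -
  have "q*((t*a - r*b)/d) + t*((p*b - q*a)/d) = (q*(t*a - r*b) + t*(p*b - q*a))/d"
    by (simp add: add_divide_distrib)
  also have "q*(t*a - r*b) + t*(p*b - q*a) = d*b" unfolding assms(2) by (simp add: algebra_simps)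
  finally show ?thesis using assms(1) by simp
qed

lemma EGL:
  fixes p q r t \<sigma> \<mu> :: complex
  assumes nz: "p*t - q*r \<noteq> 0" "\<sigma> \<noteq> 0" "\<mu> \<noteq> 0"
  and eqs: "\<sigma>*w' = w*(p*t - q*r)"
    "\<mu>*b11' = (b11*p*p + b12*p*q + b21*q*p + b22*q*q)"
    "\<mu>*b12' = (b11*p*r + b12*p*t + b21*q*r + b22*q*t)"
    "\<mu>*b21' = (b11*r*p + b12*r*q + b21*t*p + b22*t*q)"
    "\<mu>*b22' = (b11*r*r + b12*r*t + b21*t*r + b22*t*t)"
    "\<mu>*c1' = \<sigma>*(c1*p + c2*q)" "\<mu>*c2' = \<sigma>*(c1*r + c2*t)"
    "\<mu>*d1' = \<sigma>*(d1*p + d2*q)" "\<mu>*d2' = \<sigma>*(d1*r + d2*t)"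
    "\<mu>*g' = \<sigma>*\<sigma>*g"
  shows "alg_iso (gen w b11 b12 b21 b22 c1 c2 d1 d2 g) (gen w' b11' b12' b21' b22' c1' c2' d1' d2' g')"
proof (rule iso_phi[where \<phi> = "phiGL p q r t \<sigma> \<mu>" and \<psi> = "psiGL p q r t \<sigma> \<mu>"])
  fix y :: V4
  show "psiGL p q r t \<sigma> \<mu> (phiGL p q r t \<sigma> \<mu> y) = y"
    using nz by (simp add: phiGL_def psiGL_def vec_eq_iff forall_4 field_simps)
  have h1: "p*((t*y$1 - r*y$2)/(p*t-q*r)) + r*((p*y$2 - q*y$1)/(p*t-q*r)) = y$1"
    using inv2a[OF nz(1) refl] .
  have h2: "q*((t*y$1 - r*y$2)/(p*t-q*r)) + t*((p*y$2 - q*y$1)/(p*t-q*r)) = y$2"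
    using inv2b[OF nz(1) refl] .
  show "phiGL p q r t \<sigma> \<mu> (psiGL p q r t \<sigma> \<mu> y) = y"
    using nz h1 h2 by (simp add: phiGL_def psiGL_def vec_eq_iff forall_4)
next
  fix a x y
  show "phiGL p q r t \<sigma> \<mu> (a *s x + y) = a *s phiGL p q r t \<sigma> \<mu> x + phiGL p q r t \<sigma> \<mu> y"
    by (simp add: phiGL_def vec_eq_iff forall_4 algebra_simps)
next
  fix x y
  have c4: "gen w b11 b12 b21 b22 c1 c2 d1 d2 g (phiGL p q r t \<sigma> \<mu> x) (phiGL p q r t \<sigma> \<mu> y) $ 4 =
    phiGL p q r t \<sigma> \<mu> (gen w' b11' b12' b21' b22' c1' c2' d1' d2' g' x y) $ 4"
  proof -
    have "phiGL p q r t \<sigma> \<mu> (gen w' b11' b12' b21' b22' c1' c2' d1' d2' g' x y) $ 4 =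
      (\<mu>*b11')*x$1*y$1 + (\<mu>*b12')*x$1*y$2 + (\<mu>*b21')*x$2*y$1 + (\<mu>*b22')*x$2*y$2 + (\<mu>*c1')*x$1*y$3
      + (\<mu>*c2')*x$2*y$3 + (\<mu>*d1')*x$3*y$1 + (\<mu>*d2')*x$3*y$2 + (\<mu>*g')*x$3*y$3"
      by (simp add: phiGL_def gen_def algebra_simps)
    also have "\<dots> = gen w b11 b12 b21 b22 c1 c2 d1 d2 g (phiGL p q r t \<sigma> \<mu> x) (phiGL p q r t \<sigma> \<mu> y) $ 4"
      unfolding eqs by (simp add: phiGL_def gen_def algebra_simps)
    finally show ?thesis by simp
  qed
  have c3: "gen w b11 b12 b21 b22 c1 c2 d1 d2 g (phiGL p q r t \<sigma> \<mu> x) (phiGL p q r t \<sigma> \<mu> y) $ 3 =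
    phiGL p q r t \<sigma> \<mu> (gen w' b11' b12' b21' b22' c1' c2' d1' d2' g' x y) $ 3"
  proof -
    have "phiGL p q r t \<sigma> \<mu> (gen w' b11' b12' b21' b22' c1' c2' d1' d2' g' x y) $ 3 =
      (\<sigma>*w') * (x$1 * y$2 - x$2 * y$1)"
      by (simp add: phiGL_def gen_def algebra_simps)
    also have "\<dots> = gen w b11 b12 b21 b22 c1 c2 d1 d2 g (phiGL p q r t \<sigma> \<mu> x) (phiGL p q r t \<sigma> \<mu> y) $ 3"
      unfolding eqs by (simp add: phiGL_def gen_def algebra_simps)
    finally show ?thesis by simp
  qed
  show "gen w b11 b12 b21 b22 c1 c2 d1 d2 g (phiGL p q r t \<sigma> \<mu> x) (phiGL p q r t \<sigma> \<mu> y) =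
    phiGL p q r t \<sigma> \<mu> (gen w' b11' b12' b21' b22' c1' c2' d1' d2' g' x y)"
    unfolding vec_eq_iff forall_4 using c3 c4 by (simp add: phiGL_def gen_def)
qed


definition phiL :: "complex \<Rightarrow> complex \<Rightarrow> complex \<Rightarrow> V4 \<Rightarrow> V4" where
 "phiL pa pb l y = (\<chi> k::4. if k = 3 then y$3 + pa*y$1 + pb*y$2 else if k = 4 then y$4 + l*y$3 else y$k)"
definition psiL :: "complex \<Rightarrow> complex \<Rightarrow> complex \<Rightarrow> V4 \<Rightarrow> V4" where
 "psiL pa pb l y = (\<chi> k::4. if k = 3 then y$3 - pa*y$1 - pb*y$2 else if k = 4 then y$4 - l*(y$3 - pa*y$1 - pb*y$2) else y$k)"

lemma ELIFT:
  fixes pa pb l :: complex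
  assumes eqs: "w' = w"
    "b11' = b11 + pa*(c1+d1) + pa*pa*g"
    "b12' = b12 + pb*c1 + pa*d2 + pa*pb*g - w*l"
    "b21' = b21 + pa*c2 + pb*d1 + pa*pb*g + w*l"
    "b22' = b22 + pb*(c2+d2) + pb*pb*g"
    "c1' = c1 + pa*g" "c2' = c2 + pb*g"
    "d1' = d1 + pa*g" "d2' = d2 + pb*g"
    "g' = g"
  shows "alg_iso (gen w b11 b12 b21 b22 c1 c2 d1 d2 g) (gen w' b11' b12' b21' b22' c1' c2' d1' d2' g')"
proof (rule iso_phi[where \<phi> = "phiL pa pb l" and \<psi> = "psiL pa pb l"])
  fix y :: V4
  show "psiL pa pb l (phiL pa pb l y) = y"
    by (simp add: phiL_def psiL_def vec_eq_iff forall_4)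
  show "phiL pa pb l (psiL pa pb l y) = y"
    by (simp add: phiL_def psiL_def vec_eq_iff forall_4)
next
  fix a x y
  show "phiL pa pb l (a *s x + y) = a *s phiL pa pb l x + phiL pa pb l y"
    by (simp add: phiL_def vec_eq_iff forall_4 algebra_simps)
next
  fix x y
  show "gen w b11 b12 b21 b22 c1 c2 d1 d2 g (phiL pa pb l x) (phiL pa pb l y) =
    phiL pa pb l (gen w' b11' b12' b21' b22' c1' c2' d1' d2' g' x y)"
    unfolding vec_eq_iff forall_4 eqs by (simp add: phiL_def gen_def algebra_simps)
qed

lemma L01_gen: "L01 = gen 1 0 0 0 0 1 0 (-1) 0 0"
  by (rule ext)+ (simp add: L01_def gen_def tbl_mult_def tbl_def sum_4 vec_eq_iff forall_4 e_def axis_def algebra_simps)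
lemma L09_gen: "L09 = gen (-1) 0 1 0 0 (-1) 0 1 0 0"
  by (rule ext)+ (simp add: L09_def gen_def tbl_mult_def tbl_def sum_4 vec_eq_iff forall_4 e_def axis_def algebra_simps)
lemma L10_gen: "L10 = gen (-1) 0 0 0 1 (-1) 0 1 0 0"
  by (rule ext)+ (simp add: L10_def gen_def tbl_mult_def tbl_def sum_4 vec_eq_iff forall_4 e_def axis_def algebra_simps)
lemma L11_gen: "L11 = gen (-1) 1 0 0 1 (-1) 0 1 0 0"
  by (rule ext)+ (simp add: L11_def gen_def tbl_mult_def tbl_def sum_4 vec_eq_iff forall_4 e_def axis_def algebra_simps)
lemma L12_gen: "L12 = gen (-1) 1 0 0 0 (-1) 0 1 0 0"
  by (rule ext)+ (simp add: L12_def gen_def tbl_mult_def tbl_def sum_4 vec_eq_iff forall_4 e_def axis_def algebra_simps)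
lemma M03_gen: "(M03 \<alpha>) = gen 1 0 0 0 0 \<alpha> 0 (1-\<alpha>) 0 0"
  by (rule ext)+ (simp add: M03_def gen_def tbl_mult_def tbl_def sum_4 vec_eq_iff forall_4 e_def axis_def algebra_simps)
lemma M04_gen: "(M04 \<alpha>) = gen 1 0 0 0 1 \<alpha> 0 (1-\<alpha>) 0 0"
  by (rule ext)+ (simp add: M04_def gen_def tbl_mult_def tbl_def sum_4 vec_eq_iff forall_4 e_def axis_def algebra_simps)
lemma M05_gen: "M05 = gen 1 0 0 0 0 0 1 1 (-1) 0"
  by (rule ext)+ (simp add: M05_def gen_def tbl_mult_def tbl_def sum_4 vec_eq_iff forall_4 e_def axis_def algebra_simps)
lemma M06_gen: "M06 = gen 1 0 0 0 1 0 1 1 (-1) 0"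
  by (rule ext)+ (simp add: M06_def gen_def tbl_mult_def tbl_def sum_4 vec_eq_iff forall_4 e_def axis_def algebra_simps)
lemma M07_gen: "M07 = gen 1 0 0 0 0 0 0 0 0 1"
  by (rule ext)+ (simp add: M07_def gen_def tbl_mult_def tbl_def sum_4 vec_eq_iff forall_4 e_def axis_def algebra_simps)
lemma M08_gen: "M08 = gen 1 0 1 0 0 0 0 0 0 1"
  by (rule ext)+ (simp add: M08_def gen_def tbl_mult_def tbl_def sum_4 vec_eq_iff forall_4 e_def axis_def algebra_simps)
lemma M09_gen: "M09 = gen 1 1 0 0 0 0 0 0 0 1"
  by (rule ext)+ (simp add: M09_def gen_def tbl_mult_def tbl_def sum_4 vec_eq_iff forall_4 e_def axis_def algebra_simps)
lemma M10_gen: "(M10 \<alpha>) = gen 1 \<alpha> 0 0 0 1 0 (-1) 0 1"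
  by (rule ext)+ (simp add: M10_def gen_def tbl_mult_def tbl_def sum_4 vec_eq_iff forall_4 e_def axis_def algebra_simps)
lemma M11_gen: "M11 = gen 1 0 1 0 0 1 0 (-1) 0 1"
  by (rule ext)+ (simp add: M11_def gen_def tbl_mult_def tbl_def sum_4 vec_eq_iff forall_4 e_def axis_def algebra_simps)
lemma M12_gen: "(M12 \<alpha>) = gen 1 \<alpha> 0 0 1 1 0 (-1) 0 1"
  by (rule ext)+ (simp add: M12_def gen_def tbl_mult_def tbl_def sum_4 vec_eq_iff forall_4 e_def axis_def algebra_simps)

definition listed :: "(V4 \<Rightarrow> V4 \<Rightarrow> V4) \<Rightarrow> bool" where
 "listed m \<longleftrightarrow> alg_iso m L01 \<or> alg_iso m L09 \<or> alg_iso m L10 \<or> alg_iso m L11 \<or> alg_iso m L12 \<or>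
    (\<exists>\<alpha>. alg_iso m (M03 \<alpha>)) \<or> (\<exists>\<alpha>. alg_iso m (M04 \<alpha>)) \<or>
    alg_iso m M05 \<or> alg_iso m M06 \<or> alg_iso m M07 \<or> alg_iso m M08 \<or> alg_iso m M09 \<or>
    (\<exists>\<alpha>. alg_iso m (M10 \<alpha>)) \<or> alg_iso m M11 \<or> (\<exists>\<alpha>. alg_iso m (M12 \<alpha>))"

lemma listed_trans: "alg_iso m m' \<Longrightarrow> listed m' \<Longrightarrow> listed m"
  unfolding listed_def using alg_iso_trans[of m m'] by blast

lemma alg_iso_refl: "alg_iso m m"
  unfolding alg_iso_def by (rule exI[of _ id]) simp

lemma sqrt_ex: "\<exists>r::complex. r*r = z"
  by (metis power2_csqrt power2_eq_square)

lemma Lw: "alg_iso (gen 1 b11 b12 b21 b22 1 0 (-1) 0 0) (gen (-1) b11 b12 b21 b22 (-1) 0 1 0 0)"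
  by (rule EGL[where p=1 and q=0 and r=0 and t=1 and \<sigma>="-1" and \<mu>=1]) simp_all

lemma NL01: "listed (gen 1 0 0 0 0 1 0 (-1) 0 0)"
  unfolding listed_def L01_gen using alg_iso_refl by blast
lemma NL09: "listed (gen 1 0 1 0 0 1 0 (-1) 0 0)"
  unfolding listed_def L09_gen using Lw by blast
lemma NL10: "listed (gen 1 0 0 0 1 1 0 (-1) 0 0)"
  unfolding listed_def L10_gen using Lw by blast
lemma NL11: "listed (gen 1 1 0 0 1 1 0 (-1) 0 0)"
  unfolding listed_def L11_gen using Lw by blast
lemma NL12: "listed (gen 1 1 0 0 0 1 0 (-1) 0 0)"
  unfolding listed_def L12_gen using Lw by blast
lemma NM03: "listed (gen 1 0 0 0 0 \<alpha> 0 (1-\<alpha>) 0 0)"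
  unfolding listed_def M03_gen using alg_iso_refl by blast
lemma NM04: "listed (gen 1 0 0 0 1 \<alpha> 0 (1-\<alpha>) 0 0)"
  unfolding listed_def M04_gen using alg_iso_refl by blast
lemma NM05: "listed (gen 1 0 0 0 0 0 1 1 (-1) 0)"
  unfolding listed_def M05_gen using alg_iso_refl by blast
lemma NM06: "listed (gen 1 0 0 0 1 0 1 1 (-1) 0)"
  unfolding listed_def M06_gen using alg_iso_refl by blast
lemma NM07: "listed (gen 1 0 0 0 0 0 0 0 0 1)"
  unfolding listed_def M07_gen using alg_iso_refl by blast
lemma NM08: "listed (gen 1 0 1 0 0 0 0 0 0 1)"
  unfolding listed_def M08_gen using alg_iso_refl by blast
lemma NM09: "listed (gen 1 1 0 0 0 0 0 0 0 1)"
  unfolding listed_def M09_gen using alg_iso_refl by blast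
lemma NM10: "listed (gen 1 \<alpha> 0 0 0 1 0 (-1) 0 1)"
  unfolding listed_def M10_gen using alg_iso_refl by blast
lemma NM11: "listed (gen 1 0 1 0 0 1 0 (-1) 0 1)"
  unfolding listed_def M11_gen using alg_iso_refl by blast
lemma NM12: "listed (gen 1 \<alpha> 0 0 1 1 0 (-1) 0 1)"
  unfolding listed_def M12_gen using alg_iso_refl by blast

lemma shift: assumes "w \<noteq> 0" "b12 + b21 = b12' + b21'" shows
  "alg_iso (gen w b11 b12 b21 b22 c1 c2 d1 d2 g) (gen w b11 b12' b21' b22 c1 c2 d1 d2 g)"
proof (rule ELIFT[where pa=0 and pb=0 and l="(b12 - b12')/w"])
  have h: "w*((b12 - b12')/w) = b12 - b12'" using assms(1) by simp
  have h2: "b21' = b21 + (b12 - b12')" using assms(2) by algebra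
  show "b12' = b12 + 0 * c1 + 0 * d2 + 0 * 0 * g - w * ((b12 - b12') / w)"
    "b21' = b21 + 0 * c2 + 0 * d1 + 0 * 0 * g + w * ((b12 - b12') / w)"
    unfolding h using h2 by simp_all
qed simp_all

lemma shiftL: "w \<noteq> 0 \<Longrightarrow> b12 + b21 = b12' + b21' \<Longrightarrow> listed (gen w b11 b12' b21' b22 c1 c2 d1 d2 g) \<Longrightarrow>
  listed (gen w b11 b12 b21 b22 c1 c2 d1 d2 g)"
  by (rule listed_trans[OF shift])


lemma EGLB:
  fixes p q r t \<sigma> \<mu> :: complex
  assumes nz: "p*t - q*r \<noteq> 0" "\<sigma> \<noteq> 0" "\<mu> \<noteq> 0"
  and eqs: "\<sigma>*w' = w*(p*t - q*r)"
    "\<mu>*c1' = \<sigma>*(c1*p + c2*q)" "\<mu>*c2' = \<sigma>*(c1*r + c2*t)"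
    "\<mu>*d1' = \<sigma>*(d1*p + d2*q)" "\<mu>*d2' = \<sigma>*(d1*r + d2*t)"
    "\<mu>*g' = \<sigma>*\<sigma>*g"
  shows "alg_iso (gen w b11 b12 b21 b22 c1 c2 d1 d2 g) (gen w'
    ((b11*p*p + b12*p*q + b21*q*p + b22*q*q)/\<mu>)
    ((b11*p*r + b12*p*t + b21*q*r + b22*q*t)/\<mu>)
    ((b11*r*p + b12*r*q + b21*t*p + b22*t*q)/\<mu>)
    ((b11*r*r + b12*r*t + b21*t*r + b22*t*t)/\<mu>) c1' c2' d1' d2' g')"
  by (rule EGL[OF nz eqs(1) _ _ _ _ eqs(2-6)]) (use nz in simp_all)

lemma ELIFTB:
  "alg_iso (gen w b11 b12 b21 b22 c1 c2 d1 d2 g) (gen w (b11 + pa*(c1+d1) + pa*pa*g)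
    (b12 + pb*c1 + pa*d2 + pa*pb*g - w*l) (b21 + pa*c2 + pb*d1 + pa*pb*g + w*l)
    (b22 + pb*(c2+d2) + pb*pb*g) (c1 + pa*g) (c2 + pb*g) (d1 + pa*g) (d2 + pb*g) g)"
  by (rule ELIFT[where pa=pa and pb=pb and l=l]) simp_all

lemma G0s: "listed (gen 1 b11 h 0 b22 0 0 0 0 1)"
proof -
  consider "b11 = 0 \<and> h = 0 \<and> b22 = 0" | "h*h - 4*b11*b22 \<noteq> 0 \<and> b11 \<noteq> 0" | "h*h - 4*b11*b22 \<noteq> 0 \<and> b11 = 0"
    | "h*h - 4*b11*b22 = 0 \<and> b11 \<noteq> 0" | "h*h - 4*b11*b22 = 0 \<and> b11 = 0 \<and> b22 \<noteq> 0" by fastforce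
  then show ?thesis
  proof cases
    case 1 then show ?thesis using NM07 by simp
  next
    case 2
    obtain \<rho> where \<rho>: "\<rho>*\<rho> = h*h - 4*b11*b22" using sqrt_ex by blast
    have r0: "\<rho> \<noteq> 0" using \<rho> 2 by auto
    have b11: "b11 \<noteq> 0" using 2 by simp
    have b22: "b22 = (h*h - \<rho>*\<rho>)/(4*b11)" using \<rho> b11 by (simp add: field_simps)
    define p where "p = (h-\<rho>)/(4*b11)"
    define q :: complex where "q = -1/2"
    define r where "r = -h-\<rho>"
    define t where "t = 2*b11"
    have iso: "alg_iso (gen 1 b11 h 0 b22 0 0 0 0 1) (gen 1 0 ((b11*p*r + h*p*t + 0*q*r + b22*q*t)/(\<rho>*\<rho>))
       ((b11*r*p + h*r*q + 0*t*p + b22*t*q)/(\<rho>*\<rho>)) 0 0 0 0 0 1)"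
      apply (rule EGL[where p=p and q=q and r=r and t=t and \<sigma>="-\<rho>" and \<mu>="\<rho>*\<rho>"])
      using r0 b11 unfolding p_def q_def r_def t_def b22 by (simp_all add: field_simps)
    have sum: "(b11*p*r + h*p*t + 0*q*r + b22*q*t)/(\<rho>*\<rho>) + (b11*r*p + h*r*q + 0*t*p + b22*t*q)/(\<rho>*\<rho>) = 1 + 0"
      using r0 b11 unfolding p_def q_def r_def t_def b22 by (simp add: field_simps)
    show ?thesis by (rule listed_trans[OF iso shiftL[OF _ sum NM08]]) simp
  next
    case 3
    then have b11: "b11 = 0" and h0: "h \<noteq> 0" by auto
    have "alg_iso (gen 1 b11 h 0 b22 0 0 0 0 1) (gen 1 0 1 0 0 0 0 0 0 1)"
      apply (rule EGL[where p=1 and q=0 and r="-b22" and t=h and \<sigma>="h" and \<mu>="h*h"])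
      using h0 unfolding b11 apply (simp_all add: field_simps)
      done
    then show ?thesis using NM08 listed_trans by blast
  next
    case 4
    then have b11: "b11 \<noteq> 0" and e: "h*h = 4*b11*b22" by auto
    obtain k where k: "k*k = b11" using sqrt_ex by blast
    have k0: "k \<noteq> 0" using k b11 by auto
    have b22: "b22 = h*h/(4*k*k)" using e k b11 by (simp add: field_simps)
    have iso: "alg_iso (gen 1 b11 h 0 b22 0 0 0 0 1) (gen 1 1 (h*k/(2*b11)) (-h*k/(2*b11)) 0 0 0 0 0 1)"
      apply (rule EGL[where p=1 and q=0 and r="-h/(2*k)" and t=k and \<sigma>="k" and \<mu>="k*k"])
      using k0 unfolding b22 k[symmetric] apply (simp_all add: field_simps)
      done
    have sum: "h*k/(2*b11) + (-h*k/(2*b11)) = 0 + 0" by (simp add: field_simps)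
    show ?thesis by (rule listed_trans[OF iso shiftL[OF _ sum NM09]]) simp
  next
    case 5
    then have b11: "b11 = 0" and h: "h = 0" and b22: "b22 \<noteq> 0" by auto
    obtain k where k: "k*k = b22" using sqrt_ex by blast
    have k0: "k \<noteq> 0" using k b22 by auto
    have "alg_iso (gen 1 b11 h 0 b22 0 0 0 0 1) (gen 1 1 0 0 0 0 0 0 0 1)"
      apply (rule EGL[where p=0 and q=1 and r=k and t=0 and \<sigma>="-k" and \<mu>="k*k"])
      using k0 unfolding b11 h k[symmetric] apply (simp_all add: field_simps)
      done
    then show ?thesis using NM09 listed_trans by blast
  qed
qed

lemma G0: "listed (gen 1 b11 b12 b21 b22 0 0 0 0 1)"
  by (rule shiftL[OF _ _ G0s[of b11 "b12+b21" b22]]) simp_all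

lemma G1s: "listed (gen 1 b11 h 0 b22 1 0 (-1) 0 1)"
proof -
  consider "b22 \<noteq> 0" | "b22 = 0 \<and> h \<noteq> 0" | "b22 = 0 \<and> h = 0" by blast
  then show ?thesis
  proof cases
    case 1
    obtain k where k: "k*k = b22" using sqrt_ex by blast
    have k0: "k \<noteq> 0" using k 1 by auto
    have iso: "alg_iso (gen 1 b11 h 0 b22 1 0 (-1) 0 1) (gen 1 (b11 - h*h/(4*k*k)) (h/(2*k)) (-h/(2*k)) 1 1 0 (-1) 0 1)"
      apply (rule EGL[where p=k and q="-h/(2*k)" and r=0 and t=1 and \<sigma>="k" and \<mu>="k*k"])
      using k0 unfolding k[symmetric] apply (simp_all add: field_simps)
      done
    have sum: "h/(2*k) + (-h/(2*k)) = 0 + 0" by (simp add: field_simps)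
    show ?thesis by (rule listed_trans[OF iso shiftL[OF _ sum NM12]]) simp
  next
    case 2
    then have b22: "b22 = 0" and h0: "h \<noteq> 0" by auto
    have "alg_iso (gen 1 b11 h 0 b22 1 0 (-1) 0 1) (gen 1 0 1 0 0 1 0 (-1) 0 1)"
      apply (rule EGL[where p=h and q="-b11" and r=0 and t=1 and \<sigma>="h" and \<mu>="h*h"])
      using h0 unfolding b22 apply (simp_all add: field_simps)
      done
    then show ?thesis using NM11 listed_trans by blast
  next
    case 3 then show ?thesis using NM10 by simp
  qed
qed

lemma G1: "listed (gen 1 b11 b12 b21 b22 1 0 (-1) 0 1)"
  by (rule shiftL[OF _ _ G1s[of b11 "b12+b21" b22]]) simp_all

lemma Gk: "listed (gen 1 b11 b12 b21 b22 k1 k2 (-k1) (-k2) 1)"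
proof -
  consider "k1 \<noteq> 0" | "k1 = 0 \<and> k2 \<noteq> 0" | "k1 = 0 \<and> k2 = 0" by blast
  then show ?thesis
  proof cases
    case 1
    show ?thesis
      apply (rule listed_trans[OF EGLB[where p=1 and q=0 and r="-k2" and t=k1 and \<sigma>=k1 and \<mu>="k1*k1"
         and w'=1 and c1'=1 and c2'=0 and d1'="-1" and d2'=0 and g'=1] G1])
      using 1 apply (simp_all add: field_simps)
      done
  next
    case 2
    then have k1: "k1 = 0" and k2: "k2 \<noteq> 0" by auto
    show ?thesis
      apply (rule listed_trans[OF EGLB[where p=0 and q=1 and r="-k2" and t=0 and \<sigma>=k2 and \<mu>="k2*k2"
         and w'=1 and c1'=1 and c2'=0 and d1'="-1" and d2'=0 and g'=1] G1])
      using k2 unfolding k1 apply (simp_all add: field_simps)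
      done
  next
    case 3 then show ?thesis using G0 by simp
  qed
qed

lemma Gg: assumes "g \<noteq> 0" shows "listed (gen 1 b11 b12 b21 b22 c1 c2 d1 d2 g)"
  apply (rule listed_trans[OF ELIFTB[where pa="-(c1+d1)/(2*g)" and pb="-(c2+d2)/(2*g)" and l=0]])
  apply (rule listed_trans[OF EGLB[where p=1 and q=0 and r=0 and t=1 and \<sigma>=1 and \<mu>=g
         and w'=1 and c1'="(c1-d1)/(2*g)" and c2'="(c2-d2)/(2*g)" and d1'="-((c1-d1)/(2*g))" and d2'="-((c2-d2)/(2*g))" and g'=1] Gk])
  using assms apply (simp_all add: field_simps)
  done

lemma Zb22: "listed (gen 1 0 0 0 b22 0 1 1 (-1) 0)"
proof (cases "b22 = 0")
  case True then show ?thesis using NM05 by simp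
next
  case False
  have "alg_iso (gen 1 0 0 0 b22 0 1 1 (-1) 0) (gen 1 0 0 0 1 0 1 1 (-1) 0)"
    apply (rule EGL[where p=b22 and q=0 and r=0 and t=b22 and \<sigma>="b22*b22" and \<mu>="b22*b22*b22"])
    using False apply (simp_all add: field_simps)
    done
  then show ?thesis using NM06 listed_trans by blast
qed

lemma Zind1: "listed (gen 1 b11 b12 b21 b22 0 1 1 (-1) 0)"
  apply (rule listed_trans[OF ELIFT[where pa="-b11" and pb="-(b12+b21)" and l="b12+b11" and
     w'=1 and b11'=0 and b12'=0 and b21'=0 and b22'=b22 and c1'=0 and c2'=1 and d1'=1 and d2'="-1" and g'=0] Zb22])
  apply (simp_all add: algebra_simps)
  done

lemma Zind: assumes D: "c1*d2 - c2*d1 \<noteq> 0" shows "listed (gen 1 b11 b12 b21 b22 c1 c2 d1 d2 0)"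
proof -
  define D where "D = c1*d2 - c2*d1"
  have D0: "D \<noteq> 0" using D D_def by simp
  have det: "(-c2/D)*(-(c1+d1)/D) - (c1/D)*((c2+d2)/D) = -1/D"
    using D0 apply (simp add: field_simps)
    apply (simp add: D_def algebra_simps)
    done
  show ?thesis
    apply (rule listed_trans[OF EGLB[where p="-c2/D" and q="c1/D" and r="(c2+d2)/D" and t="-(c1+d1)/D" and \<sigma>="-1/D" and \<mu>="-1/D"
         and w'=1 and c1'=0 and c2'=1 and d1'=1 and d2'="-1" and g'=0] Zind1])
    unfolding det using D0 apply (simp_all add: field_simps)
    apply (simp_all add: D_def algebra_simps)
    done
qed

lemma M34b: "listed (gen 1 0 0 0 b22 \<alpha> 0 (1-\<alpha>) 0 0)"
proof (cases "b22 = 0")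
  case True then show ?thesis using NM03 by simp
next
  case False
  have "alg_iso (gen 1 0 0 0 b22 \<alpha> 0 (1-\<alpha>) 0 0) (gen 1 0 0 0 1 \<alpha> 0 (1-\<alpha>) 0 0)"
    apply (rule EGL[where p=1 and q=0 and r=0 and t="1/b22" and \<sigma>="1/b22" and \<mu>="1/b22"])
    using False apply (simp_all add: field_simps)
    done
  then show ?thesis using NM04 listed_trans by blast
qed

lemma M34: "listed (gen 1 b11 b12 b21 b22 \<alpha> 0 (1-\<alpha>) 0 0)"
  apply (rule listed_trans[OF ELIFT[where pa="-b11" and pb="-(b12+b21)" and l="b12 - \<alpha>*(b12+b21)" and
     w'=1 and b11'=0 and b12'=0 and b21'=0 and b22'=b22 and c1'=\<alpha> and c2'=0 and d1'="1-\<alpha>" and d2'=0 and g'=0] M34b])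
  apply (simp_all add: algebra_simps)
  done

lemma Zdep: assumes D: "c1*d2 - c2*d1 = 0" and e: "c1 + d1 \<noteq> 0 \<or> c2 + d2 \<noteq> 0"
  shows "listed (gen 1 b11 b12 b21 b22 c1 c2 d1 d2 0)"
proof (cases "c1 + d1 = 0")
  case False
  show ?thesis
    apply (rule listed_trans[OF EGLB[where p="1/(c1+d1)" and q=0 and r="-(c2+d2)" and t="c1+d1" and \<sigma>=1 and \<mu>=1
         and w'=1 and c1'="c1/(c1+d1)" and c2'=0 and d1'="1 - c1/(c1+d1)" and d2'=0 and g'=0] M34])
    using False D apply (simp_all add: field_simps)
    done
next
  case True
  then have e2: "c2 + d2 \<noteq> 0" using e by auto
  have d1: "d1 = -c1" using True by algebra
  have "c1*(c2+d2) = 0" using D unfolding d1 by (simp add: algebra_simps)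
  then have c1: "c1 = 0" using e2 by simp
  show ?thesis
    apply (rule listed_trans[OF EGLB[where p=0 and q="1/(c2+d2)" and r="-1" and t=0 and \<sigma>="1/(c2+d2)" and \<mu>="1/(c2+d2)"
         and w'=1 and c1'="c2/(c2+d2)" and c2'=0 and d1'="1 - c2/(c2+d2)" and d2'=0 and g'=0] M34])
    using e2 unfolding d1 c1 apply (simp_all add: field_simps)
    done
qed

lemma L1s: "listed (gen 1 b11 h 0 b22 1 0 (-1) 0 0)"
proof -
  consider "b22 \<noteq> 0 \<and> 4*b11*b22 - h*h = 0" | "b22 \<noteq> 0 \<and> 4*b11*b22 - h*h \<noteq> 0" | "b22 = 0 \<and> h \<noteq> 0"
    | "b22 = 0 \<and> h = 0 \<and> b11 = 0" | "b22 = 0 \<and> h = 0 \<and> b11 \<noteq> 0" by blast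
  then show ?thesis
  proof cases
    case 1
    then have b22: "b22 \<noteq> 0" and b11: "b11 = h*h/(4*b22)" by (auto simp: field_simps)
    have iso: "alg_iso (gen 1 b11 h 0 b22 1 0 (-1) 0 0) (gen 1 0 (h/2) (-h/2) 1 1 0 (-1) 0 0)"
      apply (rule EGL[where p=1 and q="-h/(2*b22)" and r=0 and t="1/b22" and \<sigma>="1/b22" and \<mu>="1/b22"])
      using b22 unfolding b11 apply (simp_all add: field_simps)
      done
    have sum: "h/2 + (-h/2) = 0 + 0" by simp
    show ?thesis by (rule listed_trans[OF iso shiftL[OF _ sum NL10]]) simp
  next
    case 2
    then have b22: "b22 \<noteq> 0" and D: "4*b11*b22 - h*h \<noteq> 0" by auto
    obtain k where k: "k*k = (4*b11*b22 - h*h)/4" using sqrt_ex by blast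
    have k0: "k \<noteq> 0" using k D by auto
    have b11: "b11 = (4*k*k + h*h)/(4*b22)" using k b22 by (simp add: field_simps)
    have iso: "alg_iso (gen 1 b11 h 0 b22 1 0 (-1) 0 0) (gen 1 1 (h/(2*k)) (-h/(2*k)) 1 1 0 (-1) 0 0)"
      apply (rule EGL[where p=k and q="-k*h/(2*b22)" and r=0 and t="k*k/b22" and \<sigma>="k*k*k/b22" and \<mu>="k*k*k*k/b22"])
      using b22 k0 unfolding b11 apply (simp_all add: field_simps)
      done
    have sum: "h/(2*k) + (-h/(2*k)) = 0 + 0" by simp
    show ?thesis by (rule listed_trans[OF iso shiftL[OF _ sum NL11]]) simp
  next
    case 3
    then have b22: "b22 = 0" and h0: "h \<noteq> 0" by auto
    have "alg_iso (gen 1 b11 h 0 b22 1 0 (-1) 0 0) (gen 1 0 1 0 0 1 0 (-1) 0 0)"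
      apply (rule EGL[where p=h and q="-b11" and r=0 and t=1 and \<sigma>="h" and \<mu>="h*h"])
      using h0 unfolding b22 apply (simp_all add: field_simps)
      done
    then show ?thesis using NL09 listed_trans by blast
  next
    case 4 then show ?thesis using NL01 by simp
  next
    case 5
    then have b22: "b22 = 0" and h: "h = 0" and b11: "b11 \<noteq> 0" by auto
    have "alg_iso (gen 1 b11 h 0 b22 1 0 (-1) 0 0) (gen 1 1 0 0 0 1 0 (-1) 0 0)"
      apply (rule EGL[where p=1 and q=0 and r=0 and t=b11 and \<sigma>="b11" and \<mu>="b11"])
      using b11 unfolding b22 h apply (simp_all add: field_simps)
      done
    then show ?thesis using NL12 listed_trans by blast
  qed
qed

lemma L1: "listed (gen 1 b11 b12 b21 b22 1 0 (-1) 0 0)"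
  by (rule shiftL[OF _ _ L1s[of b11 "b12+b21" b22]]) simp_all

lemma Lk: assumes "k1 \<noteq> 0 \<or> k2 \<noteq> 0" shows "listed (gen 1 b11 b12 b21 b22 k1 k2 (-k1) (-k2) 0)"
proof (cases "k1 = 0")
  case False
  show ?thesis
    apply (rule listed_trans[OF EGLB[where p="1/k1" and q=0 and r="-k2" and t=k1 and \<sigma>=1 and \<mu>=1
         and w'=1 and c1'=1 and c2'=0 and d1'="-1" and d2'=0 and g'=0] L1])
    using False apply (simp_all add: field_simps)
    done
next
  case True
  then have k2: "k2 \<noteq> 0" using assms by auto
  show ?thesis
    apply (rule listed_trans[OF EGLB[where p=0 and q="1/k2" and r="-1" and t=0 and \<sigma>="1/k2" and \<mu>="1/k2"
         and w'=1 and c1'=1 and c2'=0 and d1'="-1" and d2'=0 and g'=0] L1])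
    using k2 unfolding True apply (simp_all add: field_simps)
    done
qed

lemma Zall: assumes "\<not> (c1 = 0 \<and> c2 = 0 \<and> d1 = 0 \<and> d2 = 0)"
  shows "listed (gen 1 b11 b12 b21 b22 c1 c2 d1 d2 0)"
proof -
  consider "c1*d2 - c2*d1 \<noteq> 0" | "c1*d2 - c2*d1 = 0 \<and> (c1 + d1 \<noteq> 0 \<or> c2 + d2 \<noteq> 0)"
    | "c1 + d1 = 0 \<and> c2 + d2 = 0" by blast
  then show ?thesis
  proof cases
    case 1 then show ?thesis by (rule Zind)
  next
    case 2 then show ?thesis using Zdep by blast
  next
    case 3
    then have d1: "d1 = -c1" and d2: "d2 = -c2" by algebra+
    have "c1 \<noteq> 0 \<or> c2 \<noteq> 0" using assms d1 d2 by auto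
    then show ?thesis unfolding d1 d2 by (rule Lk)
  qed
qed

lemma classify_gen: assumes "w \<noteq> 0" "\<not> (c1 = 0 \<and> c2 = 0 \<and> d1 = 0 \<and> d2 = 0 \<and> g = 0)"
  shows "listed (gen w b11 b12 b21 b22 c1 c2 d1 d2 g)"
proof -
  have iso: "alg_iso (gen w b11 b12 b21 b22 c1 c2 d1 d2 g) (gen 1 b11 b12 b21 b22 (w*c1) (w*c2) (w*d1) (w*d2) (w*w*g))"
    apply (rule EGL[where p=1 and q=0 and r=0 and t=1 and \<sigma>=w and \<mu>=1])
    using assms(1) apply (simp_all add: field_simps)
    done
  show ?thesis
  proof (cases "g = 0")
    case False
    then have "w*w*g \<noteq> 0" using assms(1) by simp
    then show ?thesis using Gg listed_trans[OF iso] by blast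
  next
    case True
    have "\<not> (w*c1 = 0 \<and> w*c2 = 0 \<and> w*d1 = 0 \<and> w*d2 = 0)" using assms True by auto
    then have "listed (gen 1 b11 b12 b21 b22 (w*c1) (w*c2) (w*d1) (w*d2) 0)" by (rule Zall)
    then show ?thesis using listed_trans[OF iso] True by simp
  qed
qed

lemma bil_lin: "cbilinear m \<Longrightarrow> m (a *s x + y) z = a *s m x z + m y z"
  unfolding cbilinear_def by blast
lemma bil_linR: "cbilinear m \<Longrightarrow> m z (a *s x + y) = a *s m z x + m z y"
  unfolding cbilinear_def by blast
lemma bil_0L: "cbilinear m \<Longrightarrow> m 0 z = 0"
  using bil_lin[of m 1 0 0 z] by simp
lemma bil_0R: "cbilinear m \<Longrightarrow> m z 0 = 0"
  using bil_linR[of m z 1 0 0] by simp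
lemma bil_addL: "cbilinear m \<Longrightarrow> m (x + y) z = m x z + m y z"
  using bil_lin[of m 1 x y z] by simp
lemma bil_addR: "cbilinear m \<Longrightarrow> m z (x + y) = m z x + m z y"
  using bil_linR[of m z 1 x y] by simp
lemma bil_scL: "cbilinear m \<Longrightarrow> m (a *s x) z = a *s m x z"
  using bil_lin[of m a x 0 z] bil_0L[of m z] by simp
lemma bil_scR: "cbilinear m \<Longrightarrow> m z (a *s x) = a *s m z x"
  using bil_linR[of m z a x 0] bil_0R[of m z] by simp

lemma bilin_spanL:
  assumes "cbilinear m" "x \<in> vec.span S" "\<And>s. s \<in> S \<Longrightarrow> m s y \<in> vec.span P"
  shows "m x y \<in> vec.span P"
  using assms(2)
proof (induction rule: vec.span_induct_alt)
  case base then show ?case using bil_0L[OF assms(1)] vec.span_zero by simp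
next
  case (step c x z)
  then show ?case using assms(3) bil_lin[OF assms(1)] vec.span_add vec.span_scale by metis
qed

lemma bilin_spanR:
  assumes "cbilinear m" "y \<in> vec.span T" "\<And>t. t \<in> T \<Longrightarrow> m x t \<in> vec.span P"
  shows "m x y \<in> vec.span P"
  using assms(2)
proof (induction rule: vec.span_induct_alt)
  case base then show ?case using bil_0R[OF assms(1)] vec.span_zero by simp
next
  case (step c y z)
  then show ?case using assms(3) bil_linR[OF assms(1)] vec.span_add vec.span_scale by metis
qed

lemma bilin_span:
  assumes "cbilinear m" "x \<in> vec.span S" "y \<in> vec.span T"
    "\<And>s t. s \<in> S \<Longrightarrow> t \<in> T \<Longrightarrow> m s t \<in> vec.span P"
  shows "m x y \<in> vec.span P"
  by (rule bilin_spanL[OF assms(1,2)], rule bilin_spanR[OF assms(1,3)], rule assms(4))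

primrec J :: "(V4 \<Rightarrow> V4 \<Rightarrow> V4) \<Rightarrow> nat \<Rightarrow> V4 set" where
  "J m 0 = UNIV"
| "J m (Suc k) = vec.span ({m x y | x y. x \<in> J m k} \<union> {m y x | x y. x \<in> J m k})"

lemma J_sub: "vec.subspace (J m k)"
  by (cases k) (simp_all add: vec.subspace_UNIV)

lemma J_memL: "x \<in> J m k \<Longrightarrow> m x y \<in> J m (Suc k)"
  by (auto intro: vec.span_base)
lemma J_memR: "x \<in> J m k \<Longrightarrow> m y x \<in> J m (Suc k)"
  by (auto intro: vec.span_base)

lemma J_mono: "J m (Suc k) \<subseteq> J m k"
proof (induction k)
  case 0 then show ?case by simp
next
  case (Suc k)
  have "{m x y | x y. x \<in> J m (Suc k)} \<union> {m y x | x y. x \<in> J m (Suc k)} \<subseteq> {m x y | x y. x \<in> J m k} \<union> {m y x | x y. x \<in> J m k}"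
    using Suc by blast
  then show ?case by (simp only: J.simps(2)) (rule vec.span_mono)
qed

lemma J_anti: "k \<le> l \<Longrightarrow> J m l \<subseteq> J m k"
proof (induction l)
  case 0 then show ?case by simp
next
  case (Suc l)
  then show ?case using J_mono by (metis le_Suc_eq order_refl subset_trans)
qed

lemma J_prods: assumes "cbilinear m" shows "J m k \<subseteq> vec.span {v. prods m (Suc k) v}"
proof (induction k)
  case 0
  have "prods m (Suc 0) x" for x using prods.single[of m x] by simp
  then show ?case by (auto intro: vec.span_base)
next
  case (Suc k)
  have "{m x y | x y. x \<in> J m k} \<union> {m y x | x y. x \<in> J m k} \<subseteq> vec.span {v. prods m (Suc (Suc k)) v}"
  proof safe
    fix x y assume x: "x \<in> J m k"
    show "m x y \<in> vec.span {v. prods m (Suc (Suc k)) v}"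
    proof (rule bilin_span[OF assms, of x "{v. prods m (Suc k) v}" y UNIV])
      show "x \<in> vec.span {v. prods m (Suc k) v}" using Suc x by blast
      show "y \<in> vec.span UNIV" by (simp add: vec.span_base)
      fix s t :: V4 assume "s \<in> {v. prods m (Suc k) v}" "t \<in> UNIV"
      then have "prods m (Suc (Suc k)) (m s t)" using prods.mult[of m "Suc k" s 1 t] prods.single[of m t] by simp
      then show "m s t \<in> vec.span {v. prods m (Suc (Suc k)) v}" by (auto intro: vec.span_base)
    qed
    show "m y x \<in> vec.span {v. prods m (Suc (Suc k)) v}"
    proof (rule bilin_span[OF assms, of y UNIV x "{v. prods m (Suc k) v}"])
      show "x \<in> vec.span {v. prods m (Suc k) v}" using Suc x by blast
      show "y \<in> vec.span UNIV" by (simp add: vec.span_base)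
      fix s t :: V4 assume "t \<in> {v. prods m (Suc k) v}" "s \<in> UNIV"
      then have "prods m (Suc (Suc k)) (m s t)" using prods.mult[of m 1 s "Suc k" t] prods.single[of m s] by simp
      then show "m s t \<in> vec.span {v. prods m (Suc (Suc k)) v}" by (auto intro: vec.span_base)
    qed
  qed
  then show ?case by (simp only: J.simps(2)) (rule vec.span_minimal, simp_all)
qed

lemma J_nil: assumes "cbilinear m" "nilpotent_alg m" shows "\<exists>n. J m n = {0}"
proof -
  obtain n where n: "n \<ge> 1" "\<forall>v. prods m n v \<longrightarrow> v = 0" using assms(2) unfolding nilpotent_alg_def by blast
  have "{v. prods m n v} \<subseteq> {0}" using n by blast
  then have "vec.span {v. prods m n v} \<subseteq> {0}" using vec.span_mono[of "{v. prods m n v}" "{0}"] by simp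
  moreover have "Suc (n - 1) = n" using n by simp
  ultimately have "J m (n-1) \<subseteq> {0}" using J_prods[OF assms(1), of "n-1"] by simp
  then show ?thesis using vec.subspace_0[OF J_sub[of m "n-1"]] by blast
qed

lemma J_stab: assumes "cbilinear m" "nilpotent_alg m" "J m (Suc k) = J m k" shows "J m k = {0}"
proof -
  have eq: "J m (k + j) = J m k" for j
  proof (induction j)
    case 0 then show ?case by simp
  next
    case (Suc j)
    have "J m (k + Suc j) = J m (Suc (k + j))" by simp
    also have "\<dots> = J m (Suc k)" by (simp only: J.simps(2) Suc)
    finally show ?case using assms(3) by simp
  qed
  obtain n where n: "J m n = {0}" using J_nil[OF assms(1,2)] by blast
  have "J m (k + n) \<subseteq> J m n" by (rule J_anti) simp
  then show ?thesis using eq[of n] n vec.subspace_0[OF J_sub[of m k]] by blast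
qed

lemma span_J: "vec.span (J m k) = J m k"
  using J_sub vec.span_eq_iff by blast

lemma lin_yy:
  assumes bm: "cbilinear m" and ni: "nil_index3 m"
  shows "m (m x x) (m x x) = 0"
proof -
  define y where "y = m x x"
  have xy: "m x y = 0" and yx: "m y x = 0" using ni unfolding nil_index3_def y_def by auto
  have E: "t *s m y y + (t*t) *s m (m y y) x + (t*t*t) *s m (m y y) y = 0" for t
  proof -
    have "m (m (x + t *s y) (x + t *s y)) (x + t *s y) = 0" using ni unfolding nil_index3_def by blast
    moreover have "m (m (x + t *s y) (x + t *s y)) (x + t *s y) = t *s m y y + (t*t) *s m (m y y) x + (t*t*t) *s m (m y y) y"
      by (simp add: bil_addL[OF bm] bil_addR[OF bm] bil_scL[OF bm] bil_scR[OF bm] xy yx bil_0L[OF bm] bil_0R[OF bm]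
          flip: y_def)
    ultimately show ?thesis by simp
  qed
  have "m y y $ i = 0" for i
  proof -
    have e1: "m y y $ i + m (m y y) x $ i + m (m y y) y $ i = 0" using arg_cong[OF E[of 1], of "\<lambda>v. v $ i"] by simp
    have e2: "- m y y $ i + m (m y y) x $ i - m (m y y) y $ i = 0" using arg_cong[OF E[of "-1"], of "\<lambda>v. v $ i"] by simp
    have e3: "2 * m y y $ i + 4 * m (m y y) x $ i + 8 * m (m y y) y $ i = 0" using arg_cong[OF E[of 2], of "\<lambda>v. v $ i"] by simp
    have "m y y $ i = (m y y $ i + m (m y y) x $ i + m (m y y) y $ i) - (1/3) * (- m y y $ i + m (m y y) x $ i - m (m y y) y $ i)
       - (1/6) * (2 * m y y $ i + 4 * m (m y y) x $ i + 8 * m (m y y) y $ i)" by (simp add: field_simps)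
    then show ?thesis using e1 e2 e3 by simp
  qed
  then show ?thesis unfolding y_def by (simp add: vec_eq_iff)
qed


lemma dimU: "vec.dim (UNIV :: V4 set) = 4"
  by (simp add: card_cart_basis)

lemma full_span: assumes "vec.dim (S :: V4 set) = 4" shows "vec.span S = UNIV"
proof -
  have "vec.span S = UNIV"
    by (rule vec.subspace_dim_equal) (simp_all only: dimU assms vec.subspace_UNIV vec.subspace_span order_refl subset_UNIV vec.dim_span)
  then show ?thesis .
qed

lemma dim_insert_J: "x \<notin> J m k \<Longrightarrow> vec.dim (insert x (J m k)) = vec.dim (J m k) + 1"
  using vec.dim_insert[of x "J m k"] span_J[of m k] by simp

lemma dim3_false:
  assumes bm: "cbilinear m" and nil: "nilpotent_alg m" and ni: "nil_index3 m"
    and J2: "J m (Suc (Suc 0)) \<noteq> {0}" and d1: "vec.dim (J m (Suc 0)) = 3"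
  shows False
proof -
  define A1 where "A1 = J m (Suc 0)"
  define A2 where "A2 = J m (Suc (Suc 0))"
  define A3 where "A3 = J m (Suc (Suc (Suc 0)))"
  have "A1 \<noteq> UNIV"
  proof
    assume "A1 = UNIV"
    then have "vec.dim A1 = 4" using dimU by simp
    then show False using d1 unfolding A1_def by simp
  qed
  then obtain x where x: "x \<notin> A1" by blast
  have spanU: "vec.span (insert x A1) = UNIV"
    using full_span dim_insert_J[of x m "Suc 0"] x d1 unfolding A1_def by simp
  define y where "y = m x x"
  have xy: "m x y = 0" and yx: "m y x = 0" using ni unfolding nil_index3_def y_def by auto
  have yy: "m y y = 0" unfolding y_def by (rule lin_yy[OF bm ni])
  have A1sub: "A1 \<subseteq> vec.span (insert y A2)"
  proof -
    have "{m a b | a b. a \<in> J m 0} \<union> {m b a | a b. a \<in> J m 0} \<subseteq> vec.span (insert y A2)"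
    proof -
      have *: "m a b \<in> vec.span (insert y A2)" for a b
      proof (rule bilin_span[OF bm, of a "insert x A1" b "insert x A1"])
        show "a \<in> vec.span (insert x A1)" "b \<in> vec.span (insert x A1)" using spanU by auto
        fix s t assume s: "s \<in> insert x A1" and t: "t \<in> insert x A1"
        show "m s t \<in> vec.span (insert y A2)"
        proof (cases "s \<in> A1")
          case True then have "m s t \<in> A2" unfolding A1_def A2_def by (rule J_memL)
          then show ?thesis by (auto intro: vec.span_base)
        next
          case False
          then have sx: "s = x" using s by auto
          show ?thesis
          proof (cases "t \<in> A1")
            case True then have "m s t \<in> A2" unfolding A1_def A2_def by (rule J_memR)
            then show ?thesis by (auto intro: vec.span_base)
          next
            case False
            then have "t = x" using t by auto
            then show ?thesis using sx y_def by (auto intro: vec.span_base)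
          qed
        qed
      qed
      show ?thesis using * by blast
    qed
    then show ?thesis unfolding A1_def by (simp only: J.simps(2)) (rule vec.span_minimal, simp_all)
  qed
  have Usub: "b \<in> vec.span (insert x (insert y A2))" for b
  proof -
    have "insert x A1 \<subseteq> vec.span (insert x (insert y A2))"
    proof -
      have "vec.span (insert y A2) \<subseteq> vec.span (insert x (insert y A2))" by (rule vec.span_mono) blast
      then show ?thesis using A1sub by (auto intro: vec.span_base)
    qed
    then have "vec.span (insert x A1) \<subseteq> vec.span (insert x (insert y A2))"
      by (rule vec.span_minimal) simp
    then show ?thesis using spanU by auto
  qed
  have A3s: "vec.span A3 = A3" unfolding A3_def by (rule span_J)
  have A3z: "0 \<in> A3" unfolding A3_def using J_sub vec.subspace_0 by blast
  have "A2 \<subseteq> A3"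
  proof -
    have "{m a b | a b. a \<in> A1} \<union> {m b a | a b. a \<in> A1} \<subseteq> A3"
    proof safe
      fix a b assume a: "a \<in> A1"
      show "m a b \<in> A3"
      proof -
        have "m a b \<in> vec.span A3"
        proof (rule bilin_span[OF bm, of a "insert y A2" b "insert x (insert y A2)"])
          show "a \<in> vec.span (insert y A2)" using a A1sub by auto
          show "b \<in> vec.span (insert x (insert y A2))" by (rule Usub)
          fix s t assume s: "s \<in> insert y A2" and t: "t \<in> insert x (insert y A2)"
          show "m s t \<in> vec.span A3"
          proof (cases "s \<in> A2")
            case True then have "m s t \<in> A3" unfolding A2_def A3_def by (rule J_memL)
            then show ?thesis by (simp only: A3s)
          next
            case False
            then have sy: "s = y" using s by auto
            show ?thesis
            proof (cases "t \<in> A2")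
              case True then have "m s t \<in> A3" unfolding A2_def A3_def by (rule J_memR)
              then show ?thesis by (simp only: A3s)
            next
              case False
              then have "t = x \<or> t = y" using t by auto
              then have "m s t = 0" using sy xy yx yy by auto
              then show ?thesis using A3z by (simp only: A3s)
            qed
          qed
        qed
        then show ?thesis by (simp only: A3s)
      qed
      show "m b a \<in> A3"
      proof -
        have "m b a \<in> vec.span A3"
        proof (rule bilin_span[OF bm, of b "insert x (insert y A2)" a "insert y A2"])
          show "a \<in> vec.span (insert y A2)" using a A1sub by auto
          show "b \<in> vec.span (insert x (insert y A2))" by (rule Usub)
          fix s t assume s: "s \<in> insert x (insert y A2)" and t: "t \<in> insert y A2"
          show "m s t \<in> vec.span A3"
          proof (cases "t \<in> A2")
            case True then have "m s t \<in> A3" unfolding A2_def A3_def by (rule J_memR)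
            then show ?thesis by (simp only: A3s)
          next
            case False
            then have ty: "t = y" using t by auto
            show ?thesis
            proof (cases "s \<in> A2")
              case True then have "m s t \<in> A3" unfolding A2_def A3_def by (rule J_memL)
              then show ?thesis by (simp only: A3s)
            next
              case False
              then have "s = x \<or> s = y" using s by auto
              then have "m s t = 0" using ty xy yx yy by auto
              then show ?thesis using A3z by (simp only: A3s)
            qed
          qed
        qed
        then show ?thesis by (simp only: A3s)
      qed
    qed
    then have "vec.span ({m a b | a b. a \<in> A1} \<union> {m b a | a b. a \<in> A1}) \<subseteq> A3"
      using vec.span_minimal J_sub unfolding A3_def by blast
    then show ?thesis unfolding A2_def A1_def by (simp only: J.simps(2))
  qed
  then have "J m (Suc (Suc (Suc 0))) = J m (Suc (Suc 0))" using J_mono unfolding A2_def A3_def by blast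
  then have "J m (Suc (Suc 0)) = {0}" by (rule J_stab[OF bm nil])
  then show False using J2 by simp
qed

definition pre :: "complex \<Rightarrow> complex \<Rightarrow> complex \<Rightarrow> complex \<Rightarrow> complex \<Rightarrow> complex \<Rightarrow> complex \<Rightarrow> complex \<Rightarrow> complex \<Rightarrow> complex \<Rightarrow> complex \<Rightarrow> complex \<Rightarrow> complex \<Rightarrow> V4 \<Rightarrow> V4 \<Rightarrow> V4" where
"pre a11 a12 a21 a22 b11 b12 b21 b22 c1 c2 d1 d2 g x y = (\<chi> k. if k = 3 then a11*x$1*y$1 + a12*x$1*y$2 + a21*x$2*y$1 + a22*x$2*y$2
   else if k = 4 then b11*x$1*y$1 + b12*x$1*y$2 + b21*x$2*y$1 + b22*x$2*y$2 + c1*x$1*y$3 + c2*x$2*y$3 + d1*x$3*y$1 + d2*x$3*y$2 + g*x$3*y$3 else 0)"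

lemma pre_gen: "pre 0 w (-w) 0 b11 b12 b21 b22 c1 c2 d1 d2 g = gen w b11 b12 b21 b22 c1 c2 d1 d2 g"
  by (rule ext)+ (simp add: pre_def gen_def vec_eq_iff algebra_simps)

lemma iso_bij:
  assumes b: "bij \<phi>"
    and lin: "\<And>a x y. \<phi> (a *s x + y) = a *s \<phi> x + \<phi> y"
    and hom: "\<And>x y. m (\<phi> x) (\<phi> y) = \<phi> (m' x y)"
  shows "alg_iso m m'"
proof (rule iso_phi[where \<psi>="inv \<phi>" and \<phi>=\<phi> and m=m and m'=m'])
  show "inv \<phi> (\<phi> y) = y" "\<phi> (inv \<phi> y) = y" for y
    using b by (simp_all add: bij_is_inj bij_is_surj surj_f_inv_f)
qed (simp_all add: lin hom)

lemma nil_transfer: assumes "alg_iso m M" "nil_index3 m" shows "nil_index3 M"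
proof -
  obtain f where f: "bij f" "\<And>a x y. f (a *s x + y) = a *s f x + f y" "\<And>x y. f (m x y) = M (f x) (f y)"
    using assms(1) unfolding alg_iso_def by blast
  have f0: "f 0 = 0" using f(2)[of 1 0 0] by simp
  show ?thesis unfolding nil_index3_def
  proof
    fix u
    obtain x where x: "u = f x" using f(1) by (metis bij_pointE)
    have "M (M u u) u = f (m (m x x) x)" "M u (M u u) = f (m x (m x x))" unfolding x f(3) by simp_all
    then show "M (M u u) u = 0 \<and> M u (M u u) = 0" using assms(2) f0 unfolding nil_index3_def by simp
  qed
qed

lemma cubic_zero:
  fixes a11 s a22 l1 l2 :: complex
  assumes e1: "a11*l1 = 0" and e2: "a22*l2 = 0" and e3: "(a11+s+a22)*(l1+l2) = 0" and e4: "(a11-s+a22)*(l1-l2) = 0"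
    and l: "l1 \<noteq> 0 \<or> l2 \<noteq> 0"
  shows "a11 = 0 \<and> s = 0 \<and> a22 = 0"
proof -
  have C2: "a11*l2 + s*l1 = 0" and C1: "s*l2 + a22*l1 = 0"
    using e1 e2 e3 e4 by algebra+
  show ?thesis
  proof (cases "l1 = 0")
    case False
    then have "a11 = 0" using e1 by simp
    then have "s = 0" using C2 False by simp
    then have "a22 = 0" using C1 False by simp
    then show ?thesis using \<open>a11 = 0\<close> \<open>s = 0\<close> by simp
  next
    case True
    then have l2: "l2 \<noteq> 0" using l by simp
    then have "a22 = 0" using e2 by simp
    then have "s = 0" using C1 l2 True by simp
    then have "a11 = 0" using C2 l2 True by simp
    then show ?thesis using \<open>a22 = 0\<close> \<open>s = 0\<close> by simp
  qed
qed

lemma pre_nil: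
  assumes ni: "nil_index3 (pre a11 a12 a21 a22 b11 b12 b21 b22 c1 c2 d1 d2 g)"
    and nz: "\<not> (c1 = 0 \<and> c2 = 0 \<and> d1 = 0 \<and> d2 = 0 \<and> g = 0)"
  shows "a11 = 0 \<and> a22 = 0 \<and> a21 = -a12"
proof -
  let ?P = "pre a11 a12 a21 a22 b11 b12 b21 b22 c1 c2 d1 d2 g"
  define q where "q v1 v2 = a11* v1* v1 + (a12+a21)* v1* v2 + a22* v2* v2" for v1 v2
  have E: "q v1 v2 * (d1* v1 + d2* v2 + g * s) = 0 \<and> q v1 v2 * (c1* v1 + c2* v2 + g * s) = 0" for v1 v2 s
  proof -
    define x :: V4 where "x = (\<chi> k. if k = 1 then v1 else if k = 2 then v2 else if k = 3 then s else 0)"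
    have "?P (?P x x) x $ 4 = 0" "?P x (?P x x) $ 4 = 0" using ni unfolding nil_index3_def by simp_all
    moreover have "?P (?P x x) x $ 4 = q v1 v2 * (d1 * v1 + d2 * v2 + g * s)"
      "?P x (?P x x) $ 4 = q v1 v2 * (c1 * v1 + c2 * v2 + g * s)"
      unfolding x_def q_def by (simp_all add: pre_def algebra_simps)
    ultimately show ?thesis by simp
  qed
  have Eg: "q v1 v2 * g = 0" and Ed: "q v1 v2 * (d1* v1 + d2* v2) = 0" and Ec: "q v1 v2 * (c1* v1 + c2* v2) = 0" for v1 v2
  proof -
    have a: "q v1 v2 * (d1* v1 + d2* v2 + g*0) = 0" "q v1 v2 * (d1* v1 + d2* v2 + g*1) = 0"
      "q v1 v2 * (c1* v1 + c2* v2 + g*0) = 0" using E by blast+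
    then show "q v1 v2 * g = 0" by (simp add: algebra_simps)
    show "q v1 v2 * (d1* v1 + d2* v2) = 0" "q v1 v2 * (c1* v1 + c2* v2) = 0" using a by simp_all
  qed
  have q10: "q 1 0 = a11" and q01: "q 0 1 = a22" and q11: "q 1 1 = a11 + (a12+a21) + a22"
    and q1m: "q 1 (-1) = a11 - (a12+a21) + a22" unfolding q_def by simp_all
  have res: "a11 = 0 \<and> a12 + a21 = 0 \<and> a22 = 0"
  proof (cases "g = 0")
    case False
    then show ?thesis using Eg[of 1 0] Eg[of 0 1] Eg[of 1 1] q10 q01 q11 by auto
  next
    case g: True
    show ?thesis
    proof (cases "d1 = 0 \<and> d2 = 0")
      case False
      show ?thesis
        by (rule cubic_zero[of _ d1 _ d2]) (use Ed[of 1 0] Ed[of 0 1] Ed[of 1 1] Ed[of 1 "-1"] q10 q01 q11 q1m False in simp_all)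
    next
      case True
      then have "c1 \<noteq> 0 \<or> c2 \<noteq> 0" using nz g by auto
      then show ?thesis
        by (intro cubic_zero[of _ c1 _ c2]) (use Ec[of 1 0] Ec[of 0 1] Ec[of 1 1] Ec[of 1 "-1"] q10 q01 q11 q1m in simp_all)
    qed
  qed
  then show ?thesis by (simp add: eq_neg_iff_add_eq_0 add.commute)
qed

lemma KL:
  assumes bm: "cbilinear m" and sp: "vec.span {b1, b2, b3, b4} = UNIV"
  and p11: "m b1 b1 = a11 *s b3 + B11 *s b4" and p12: "m b1 b2 = a12 *s b3 + B12 *s b4"
  and p21: "m b2 b1 = a21 *s b3 + B21 *s b4" and p22: "m b2 b2 = a22 *s b3 + B22 *s b4"
  and q13: "m b1 b3 = c1 *s b4" and q23: "m b2 b3 = c2 *s b4"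
  and q31: "m b3 b1 = d1 *s b4" and q32: "m b3 b2 = d2 *s b4" and q33: "m b3 b3 = g *s b4"
  and z1: "\<And>x. m b4 x = 0" and z2: "\<And>x. m x b4 = 0"
  shows "alg_iso m (pre a11 a12 a21 a22 B11 B12 B21 B22 c1 c2 d1 d2 g)"
proof -
  define \<phi> where "\<phi> y = y$1 *s b1 + y$2 *s b2 + y$3 *s b3 + y$4 *s b4" for y :: V4
  have lin: "\<phi> (a *s x + y) = a *s \<phi> x + \<phi> y" for a x y
    unfolding \<phi>_def by (simp add: vec_eq_iff algebra_simps)
  have add: "\<phi> (x + y) = \<phi> x + \<phi> y" for x y using lin[of 1 x y] by simp
  have sc: "\<phi> (a *s x) = a *s \<phi> x" for a x
  proof -
    have "\<phi> 0 = 0" unfolding \<phi>_def by simp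
    then show ?thesis using lin[of a x 0] by simp
  qed
  have linear: "Vector_Spaces.linear (*s) (*s) \<phi>"
    unfolding Vector_Spaces.linear_iff using vec.vector_space_axioms add sc by blast
  have sub: "vec.subspace (range \<phi>)"
    unfolding vec.subspace_def
  proof (intro conjI ballI allI)
    show "0 \<in> range \<phi>" by (rule range_eqI[of _ _ 0]) (simp add: \<phi>_def)
    fix x y assume "x \<in> range \<phi>" "y \<in> range \<phi>"
    then obtain u v where "x = \<phi> u" "y = \<phi> v" by blast
    then have "x + y = \<phi> (u + v)" using add by simp
    then show "x + y \<in> range \<phi>" by simp
  next
    fix c x assume "x \<in> range \<phi>"
    then obtain u where "x = \<phi> u" by blast
    then have "c *s x = \<phi> (c *s u)" using sc by simp
    then show "c *s x \<in> range \<phi>" by simp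
  qed
  have "b1 = \<phi> (axis 1 1)" "b2 = \<phi> (axis 2 1)" "b3 = \<phi> (axis 3 1)" "b4 = \<phi> (axis 4 1)"
    unfolding \<phi>_def by (simp_all add: axis_def)
  then have "{b1, b2, b3, b4} \<subseteq> range \<phi>" by auto
  then have "vec.span {b1, b2, b3, b4} \<subseteq> range \<phi>" using sub vec.span_minimal by blast
  then have surj: "surj \<phi>" using sp by auto
  have inj: "inj \<phi>"
    by (rule vec.linear_surjective_imp_injective[OF linear surj]) simp
  have hom: "m (\<phi> x) (\<phi> y) = \<phi> (pre a11 a12 a21 a22 B11 B12 B21 B22 c1 c2 d1 d2 g x y)" for x y
  proof -
    have "m (\<phi> x) (\<phi> y) = (x$1*y$1*a11 + x$1*y$2*a12 + x$2*y$1*a21 + x$2*y$2*a22) *s b3 +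
       (x$1*y$1*B11 + x$1*y$2*B12 + x$2*y$1*B21 + x$2*y$2*B22 + x$1*y$3*c1 + x$2*y$3*c2
         + x$3*y$1*d1 + x$3*y$2*d2 + x$3*y$3*g) *s b4"
      unfolding \<phi>_def
      by (simp add: bil_addL[OF bm] bil_addR[OF bm] bil_scL[OF bm] bil_scR[OF bm] p11 p12 p21 p22 q13 q23 q31 q32 q33 z1 z2)
         (simp add: vec_eq_iff algebra_simps)
    also have "\<dots> = \<phi> (pre a11 a12 a21 a22 B11 B12 B21 B22 c1 c2 d1 d2 g x y)"
      unfolding \<phi>_def by (simp add: pre_def vec_eq_iff algebra_simps)
    finally show ?thesis .
  qed
  show ?thesis
  proof (rule iso_bij[where \<phi>=\<phi>])
    show "bij \<phi>" using inj surj by (simp add: bij_def)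
  qed (rule lin, rule hom)
qed

declare J.simps(2) [simp del]

lemma span1: "x \<in> vec.span {v} \<Longrightarrow> \<exists>c. x = c *s v"
  unfolding vec.span_singleton by auto

lemma span2: "x \<in> vec.span {u, v} \<Longrightarrow> \<exists>a b. x = a *s u + b *s v"
proof -
  assume "x \<in> vec.span {u, v}"
  then obtain k where "x - k *s u \<in> vec.span {v}" unfolding vec.span_insert by blast
  then obtain j where "x - k *s u = j *s v" using span1 by blast
  then have "x = k *s u + j *s v" by (simp add: algebra_simps)
  then show ?thesis by blast
qed

lemma strict:
  assumes bm: "cbilinear m" and nil: "nilpotent_alg m" and ne: "J m k \<noteq> {0}"
  shows "vec.dim (J m (Suc k)) < vec.dim (J m k)"
proof -
  have "J m (Suc k) \<noteq> J m k" using J_stab[OF bm nil] ne by blast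
  then have "vec.span (J m (Suc k)) \<subset> vec.span (J m k)" unfolding span_J using J_mono[of m k] by blast
  then show ?thesis by (rule vec.dim_psubset)
qed

lemma J2ne:
  assumes "\<not> two_step_nilpotent m" shows "J m (Suc (Suc 0)) \<noteq> {0}"
proof
  assume z: "J m (Suc (Suc 0)) = {0}"
  have "m (m x y) z = 0 \<and> m x (m y z) = 0" for x y z
  proof -
    have "m x y \<in> J m (Suc 0)" "m y z \<in> J m (Suc 0)" by (simp_all add: J_memL)
    then have "m (m x y) z \<in> J m (Suc (Suc 0))" "m x (m y z) \<in> J m (Suc (Suc 0))"
      by (simp_all only: J_memL J_memR)
    then show ?thesis using z by simp
  qed
  then show False using assms unfolding two_step_nilpotent_def by blast
qed

lemma dim1: "v \<noteq> 0 \<Longrightarrow> vec.dim {v} = 1"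
  using vec.dim_insert[of v "{}"] by simp

lemma phase1:
  assumes bm: "cbilinear m" and nil: "nilpotent_alg m" and ni: "nil_index3 m"
    and nts: "\<not> two_step_nilpotent m"
  shows "\<exists>w b11 b12 b21 b22 c1 c2 d1 d2 g. w \<noteq> 0 \<and> \<not> (c1 = 0 \<and> c2 = 0 \<and> d1 = 0 \<and> d2 = 0 \<and> g = 0)
     \<and> alg_iso m (gen w b11 b12 b21 b22 c1 c2 d1 d2 g)"
proof -
  define A1 where "A1 = J m (Suc 0)"
  define A2 where "A2 = J m (Suc (Suc 0))"
  define A3 where "A3 = J m (Suc (Suc (Suc 0)))"
  have A2ne: "A2 \<noteq> {0}" unfolding A2_def by (rule J2ne[OF nts])
  have A21: "A2 \<subseteq> A1" and A32: "A3 \<subseteq> A2" unfolding A1_def A2_def A3_def by (simp_all only: J_mono)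
  have z2: "0 \<in> A2" unfolding A2_def using J_sub vec.subspace_0 by blast
  have A1ne: "A1 \<noteq> {0}" using A2ne A21 z2 by blast
  have "axis (1::4) (1::complex) $ 1 \<noteq> (0::V4) $ 1" by (simp add: axis_def)
  then have "(UNIV :: V4 set) \<noteq> {0}" by auto
  then have "vec.dim A1 < 4" using strict[OF bm nil, of 0] dimU unfolding A1_def by simp
  moreover have "vec.dim A2 < vec.dim A1" using strict[OF bm nil, of "Suc 0"] A1ne unfolding A1_def A2_def by simp
  moreover have "vec.dim A3 < vec.dim A2" using strict[OF bm nil, of "Suc (Suc 0)"] A2ne unfolding A3_def A2_def by simp
  moreover have "vec.dim A2 \<noteq> 0" using A2ne z2 vec.dim_eq_0[of A2] by blast
  moreover have "vec.dim A1 \<noteq> 3" using dim3_false[OF bm nil ni] A2ne unfolding A1_def A2_def by blast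
  ultimately have d1: "vec.dim A1 = 2" and d2: "vec.dim A2 = 1" and d3: "vec.dim A3 = 0" by linarith+
  have A3z: "A3 \<subseteq> {0}" using d3 vec.dim_eq_0 by blast
  obtain b4 where b4: "b4 \<in> A2" "b4 \<noteq> 0" using A2ne z2 by blast
  have A2eq: "A2 = vec.span {b4}"
  proof -
    have sub: "vec.span {b4} \<subseteq> A2" by (rule vec.span_minimal) (use b4(1) J_sub in \<open>auto simp: A2_def\<close>)
    have "vec.span {b4} = A2"
      by (rule vec.subspace_dim_equal) (use sub d2 dim1[OF b4(2)] J_sub in \<open>auto simp: A2_def\<close>)
    then show ?thesis by simp
  qed
  have "A1 \<noteq> A2" using d1 d2 by auto
  then obtain b3 where b3: "b3 \<in> A1" "b3 \<notin> A2" using A21 by blast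
  have dim34: "vec.dim {b3, b4} = 2" using vec.dim_insert[of b3 "{b4}"] b3(2) A2eq dim1[OF b4(2)] by simp
  have A1eq: "A1 = vec.span {b3, b4}"
  proof -
    have sub: "vec.span {b3, b4} \<subseteq> A1" by (rule vec.span_minimal) (use b3(1) b4(1) A21 J_sub in \<open>auto simp: A1_def\<close>)
    have "vec.span {b3, b4} = A1"
      by (rule vec.subspace_dim_equal) (use sub d1 dim34 J_sub in \<open>auto simp: A1_def\<close>)
    then show ?thesis by simp
  qed
  have "A1 \<noteq> UNIV" using d1 dimU by auto
  then obtain b1 where b1: "b1 \<notin> A1" by blast
  have dim134: "vec.dim {b1, b3, b4} = 3" using vec.dim_insert[of b1 "{b3, b4}"] b1 A1eq dim34 by simp
  have "vec.span {b1, b3, b4} \<noteq> UNIV"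
  proof
    assume "vec.span {b1, b3, b4} = UNIV"
    then have "vec.dim (vec.span {b1, b3, b4}) = 4" using dimU by simp
    then show False using dim134 by (simp only: vec.dim_span)
  qed
  then obtain b2 where b2: "b2 \<notin> vec.span {b1, b3, b4}" by blast
  have "vec.dim {b2, b1, b3, b4} = 4" using vec.dim_insert[of b2 "{b1, b3, b4}"] b2 dim134 by simp
  then have spU: "vec.span {b1, b2, b3, b4} = UNIV" using full_span by (simp add: insert_commute)
  have inA1: "m x y \<in> A1" for x y unfolding A1_def by (simp add: J_memL)
  have inA2L: "x \<in> A1 \<Longrightarrow> m x y \<in> A2" and inA2R: "x \<in> A1 \<Longrightarrow> m y x \<in> A2" for x y
    unfolding A1_def A2_def by (simp_all only: J_memL J_memR)
  have z4L: "m b4 x = 0" and z4R: "m x b4 = 0" for x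
  proof -
    have "b4 \<in> J m (Suc (Suc 0))" using b4 A2_def by simp
    then have "m b4 x \<in> A3" "m x b4 \<in> A3" unfolding A3_def by (simp_all only: J_memL J_memR)
    then show "m b4 x = 0" "m x b4 = 0" using A3z by auto
  qed
  obtain a11 B11 where p11: "m b1 b1 = a11 *s b3 + B11 *s b4" using span2 inA1 A1eq by blast
  obtain a12 B12 where p12: "m b1 b2 = a12 *s b3 + B12 *s b4" using span2 inA1 A1eq by blast
  obtain a21 B21 where p21: "m b2 b1 = a21 *s b3 + B21 *s b4" using span2 inA1 A1eq by blast
  obtain a22 B22 where p22: "m b2 b2 = a22 *s b3 + B22 *s b4" using span2 inA1 A1eq by blast
  obtain c1 where q13: "m b1 b3 = c1 *s b4" using span1 inA2R[OF b3(1)] A2eq by blast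
  obtain c2 where q23: "m b2 b3 = c2 *s b4" using span1 inA2R[OF b3(1)] A2eq by blast
  obtain d1 where q31: "m b3 b1 = d1 *s b4" using span1 inA2L[OF b3(1)] A2eq by blast
  obtain d2 where q32: "m b3 b2 = d2 *s b4" using span1 inA2L[OF b3(1)] A2eq by blast
  obtain g where q33: "m b3 b3 = g *s b4" using span1 inA2L[OF b3(1)] A2eq by blast
  have iso: "alg_iso m (pre a11 a12 a21 a22 B11 B12 B21 B22 c1 c2 d1 d2 g)"
    by (rule KL[OF bm spU p11 p12 p21 p22 q13 q23 q31 q32 q33 z4L z4R])
  have nz: "\<not> (c1 = 0 \<and> c2 = 0 \<and> d1 = 0 \<and> d2 = 0 \<and> g = 0)"
  proof
    assume c: "c1 = 0 \<and> c2 = 0 \<and> d1 = 0 \<and> d2 = 0 \<and> g = 0"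
    have st0: "m s t = 0" if "s \<in> {b3, b4}" "t \<in> {b1, b2, b3, b4}" for s t
      using that c q13 q23 q31 q32 q33 z4L z4R by auto
    have ts0: "m t s = 0" if "s \<in> {b3, b4}" "t \<in> {b1, b2, b3, b4}" for s t
      using that c q13 q23 q31 q32 q33 z4L z4R by auto
    have "{m x y | x y. x \<in> A1} \<union> {m y x | x y. x \<in> A1} \<subseteq> vec.span {}"
    proof safe
      fix x y assume x: "x \<in> A1"
      show "m x y \<in> vec.span {}"
        by (rule bilin_span[OF bm, of x "{b3, b4}" y "{b1, b2, b3, b4}"]) (use x A1eq spU st0 in auto)
      show "m y x \<in> vec.span {}"
        by (rule bilin_span[OF bm, of y "{b1, b2, b3, b4}" x "{b3, b4}"]) (use x A1eq spU ts0 in auto)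
    qed
    then have "A2 \<subseteq> vec.span {}" unfolding A2_def A1_def
      by (simp only: J.simps(2)) (rule vec.span_minimal, simp_all)
    then show False using A2ne z2 by auto
  qed
  have ni': "nil_index3 (pre a11 a12 a21 a22 B11 B12 B21 B22 c1 c2 d1 d2 g)"
    by (rule nil_transfer[OF iso ni])
  have a: "a11 = 0 \<and> a22 = 0 \<and> a21 = -a12" by (rule pre_nil[OF ni' nz])
  have w: "a12 \<noteq> 0"
  proof
    assume a12: "a12 = 0"
    have st: "m s t \<in> vec.span {b4}" if "s \<in> {b1, b2, b3, b4}" "t \<in> {b1, b2, b3, b4}" for s t
    proof -
      have "\<exists>c. m s t = c *s b4"
        using that a a12 p11 p12 p21 p22 q13 q23 q31 q32 q33 z4L z4R
        by (auto intro: exI[of _ 0])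
      then show ?thesis by (auto simp: vec.span_singleton)
    qed
    have "{m x y | x y. x \<in> J m 0} \<union> {m y x | x y. x \<in> J m 0} \<subseteq> vec.span {b4}"
    proof safe
      fix x y :: V4
      show "m x y \<in> vec.span {b4}"
        by (rule bilin_span[OF bm, of x "{b1, b2, b3, b4}" y "{b1, b2, b3, b4}"]) (use spU st in auto)
      show "m y x \<in> vec.span {b4}"
        by (rule bilin_span[OF bm, of y "{b1, b2, b3, b4}" x "{b1, b2, b3, b4}"]) (use spU st in auto)
    qed
    then have "A1 \<subseteq> vec.span {b4}" unfolding A1_def
      by (simp only: J.simps(2)) (rule vec.span_minimal, simp_all)
    then show False using b3 A2eq by auto
  qed
  have "pre a11 a12 a21 a22 B11 B12 B21 B22 c1 c2 d1 d2 g = gen a12 B11 B12 B21 B22 c1 c2 d1 d2 g"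
    using a pre_gen by simp
  then show ?thesis using iso w nz by metis
qed

theorem theoremC:
  fixes m :: "V4 \<Rightarrow> V4 \<Rightarrow> V4"
  assumes "cbilinear m" and "nilpotent_alg m" and "nil_index3 m"
  shows "two_step_nilpotent m \<or>
    alg_iso m L01 \<or> alg_iso m L09 \<or> alg_iso m L10 \<or> alg_iso m L11 \<or> alg_iso m L12 \<or>
    (\<exists>\<alpha>. alg_iso m (M03 \<alpha>)) \<or> (\<exists>\<alpha>. alg_iso m (M04 \<alpha>)) \<or>
    alg_iso m M05 \<or> alg_iso m M06 \<or> alg_iso m M07 \<or> alg_iso m M08 \<or> alg_iso m M09 \<or>
    (\<exists>\<alpha>. alg_iso m (M10 \<alpha>)) \<or> alg_iso m M11 \<or> (\<exists>\<alpha>. alg_iso m (M12 \<alpha>))"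
proof (cases "two_step_nilpotent m")
  case True then show ?thesis by simp
next
  case False
  obtain w b11 b12 b21 b22 c1 c2 d1 d2 g where w: "w \<noteq> 0" and nz: "\<not> (c1 = 0 \<and> c2 = 0 \<and> d1 = 0 \<and> d2 = 0 \<and> g = 0)"
    and iso: "alg_iso m (gen w b11 b12 b21 b22 c1 c2 d1 d2 g)"
    using phase1[OF assms False] by blast
  have "listed m" by (rule listed_trans[OF iso classify_gen[OF w nz]])
  then show ?thesis unfolding listed_def by blast
qed

end
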